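(* Let $A=(a,ha-d,ha+d)$ with $d,h\in\mathbb{P}$, $\gcd(a,d)=1$, $ha-d>1$, and $r_1=\lfloor\frac{ha-d}{2h}\rfloor$. Then $$\sum_{r=0}^{a-1}x^{N_r}=\frac{1-x^{(ha+d)(r_1+1)}}{1-x^{ha+d}}+\frac{x^{ha-d}\big(1-x^{(ha-d)(a-r_1-1)}\big)}{1-x^{ha-d}}.$$
   Context: For $A=(a,c_1,\dots,c_m)$ of positive integers with $\gcd(A)=1$ and $0\le r\le a-1$, $N_r$ is the least nonnegative integer $a_0\equiv r\pmod a$ that can be written as $\sum_{i=1}^m c_ix_i$ with all $x_i$ nonnegative integers. $\mathbb{P}=\{1,2,\dots\}$. *)

theory Defs
  imports Complex_Main
begin

text \<open>For A = (a, c_1, ..., c_m) (the c_i given as the list cs) and residue r,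
  N a cs r is the least nonnegative integer congruent to r mod a that is a
  nonnegative integer combination of the c_i.\<close>
definition N :: "nat \<Rightarrow> nat list \<Rightarrow> nat \<Rightarrow> nat" where
  "N a cs r = (LEAST n. n mod a = r mod a \<and>
      (\<exists>xs :: nat list. length xs = length cs \<and> n = (\<Sum>i<length cs. cs ! i * xs ! i)))"

end

theory Submission
  imports Defs
begin

lemma rep2: "(\<exists>xs::nat list. length xs = length [p,q] \<and> n = (\<Sum>i<length [p,q]. [p,q]!i * xs!i))
   \<longleftrightarrow> (\<exists>u v. n = p*u + q*v)"
proof
  assume "\<exists>xs::nat list. length xs = length [p,q] \<and> n = (\<Sum>i<length [p,q]. [p,q]!i * xs!i)"
  moreover have "length [p,q] = 2" by simp
  ultimately obtain xs :: "nat list" where "length xs = 2" "n = (\<Sum>i<2. [p,q]!i * xs!i)" by metis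
  then have "n = p * xs!0 + q * xs!1" by (simp add: eval_nat_numeral)
  then show "\<exists>u v. n = p*u + q*v" by blast
next
  assume "\<exists>u v. n = p*u + q*v"
  then obtain u v where "n = p*u + q*v" by blast
  then have "length [u,v] = length [p,q] \<and> n = (\<Sum>i<length [p,q]. [p,q]!i * [u,v]!i)"
    by (simp add: eval_nat_numeral)
  then show "\<exists>xs::nat list. length xs = length [p,q] \<and> n = (\<Sum>i<length [p,q]. [p,q]!i * xs!i)" by blast
qed

lemma fchar:
  fixes a d h k :: nat
  assumes "a > 0" "d < h*a" "k < a"
  shows "(h*a+d)*k \<le> (h*a-d)*(a-k) \<longleftrightarrow> 2*h*k \<le> h*a-d"
proof -
  have e: "int ((h*a-d)*(a-k)) - int((h*a+d)*k) = int a * (int h*int a - int d - 2*int h*int k)"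
  proof -
    have "int ((h*a-d)*(a-k)) = (int h*int a - int d)*(int a - int k)"
      using assms by (simp add: of_nat_diff)
    then show ?thesis by (simp add: algebra_simps)
  qed
  have "(h*a+d)*k \<le> (h*a-d)*(a-k) \<longleftrightarrow> 0 \<le> int ((h*a-d)*(a-k)) - int((h*a+d)*k)" by linarith
  also have "\<dots> \<longleftrightarrow> 0 \<le> int h*int a - int d - 2*int h*int k" unfolding e using assms
    by (simp add: zero_le_mult_iff)
  also have "\<dots> \<longleftrightarrow> 2*h*k \<le> h*a-d" 
  proof -
    have "int (h*a-d) = int h*int a - int d" using assms by (simp add: of_nat_diff)
    moreover have "int(2*h*k) = 2*int h*int k" by simp
    moreover have "(2*h*k \<le> h*a-d) = (int(2*h*k) \<le> int(h*a-d))" by (rule of_nat_le_iff[symmetric])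
    ultimately show ?thesis by (smt (verit))
  qed
  finally show ?thesis .
qed
lemma nat_mod_int: "((n::nat) mod a = m mod a) \<longleftrightarrow> (int a dvd int n - int m)"
  by (metis of_nat_eq_iff of_nat_mod mod_eq_dvd_iff)

lemma Nval:
  fixes a d h k :: nat
  assumes a0: "a > 0" and "d > 0" "h > 0" and cop: "coprime a d" and dl: "d < h*a" and ka: "k < a"
  shows "N a [h*a-d, h*a+d] (d*k mod a) =
    (if 2*h*k \<le> h*a-d then (h*a+d)*k else (h*a-d)*(a-k))" (is "_ = ?F")
  unfolding N_def rep2 mod_mod_trivial
proof (rule Least_equality)
  have bint: "int (h*a-d) = int h*int a - int d" using dl by (simp add: of_nat_diff)
  show "?F mod a = d * k mod a \<and> (\<exists>u v. ?F = (h*a-d) * u + (h*a+d) * v)"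
  proof (cases "2*h*k \<le> h*a-d")
    case True
    have "int a dvd int ((h*a+d)*k) - int (d*k)"
    proof -
      have "int ((h*a+d)*k) - int (d*k) = int a * (int h * int k)" by (simp add: algebra_simps)
      then show ?thesis by simp
    qed
    then have "((h*a+d)*k) mod a = (d*k) mod a" using nat_mod_int by blast
    moreover have "(h*a+d)*k = (h*a-d) * 0 + (h*a+d) * k" by simp
    ultimately show ?thesis by (simp only: if_P[OF True]) blast
  next
    case False
    have "int a dvd int ((h*a-d)*(a-k)) - int (d*k)"
    proof -
      have "int ((h*a-d)*(a-k)) - int (d*k) = int a * (int h * (int a - int k) - int d)"
      proof -
        have "int ((h*a-d)*(a-k)) = (int h*int a - int d)*(int a - int k)"
          using ka dl by (simp add: of_nat_diff)
        then show ?thesis by (simp add: algebra_simps)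
      qed
      then show ?thesis by simp
    qed
    then have "((h*a-d)*(a-k)) mod a = (d*k) mod a" using nat_mod_int by blast
    moreover have "(h*a-d)*(a-k) = (h*a-d) * (a-k) + (h*a+d) * 0" by simp
    ultimately show ?thesis by (simp only: if_not_P[OF False]) blast
  qed
next
  fix n assume "n mod a = d * k mod a \<and> (\<exists>u v. n = (h*a-d) * u + (h*a+d) * v)"
  then obtain u v where nm: "n mod a = d * k mod a" and nuv: "n = (h*a-d) * u + (h*a+d) * v" by blast
  have bint: "int (h*a-d) = int h*int a - int d" using dl by (simp add: of_nat_diff)
  have "int a dvd int n - int (d*k)" using nm nat_mod_int by blast
  moreover have "int n - int (d*k) = int a * (int h * (int u + int v)) + int d * (int v - int u - int k)"
  proof -
    have "int n = int (h*a-d) * int u + (int h*int a + int d)*int v" using nuv by simp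
    then show ?thesis unfolding bint by (simp add: algebra_simps)
  qed
  ultimately have "int a dvd int d * (int v - int u - int k)"
    by (simp add: dvd_add_right_iff)
  moreover have "coprime (int a) (int d)" using cop by simp
  ultimately have dv: "int a dvd (int v - int u - int k)"
    by (metis coprime_dvd_mult_right_iff)
  have f1: "?F \<le> (h*a+d)*k" using fchar[OF a0 dl ka] by auto
  have f2: "k > 0 \<Longrightarrow> ?F \<le> (h*a-d)*(a-k)" using fchar[OF a0 dl ka] by auto
  show "?F \<le> n"
  proof (cases "u \<le> v")
    case True
    have "int a dvd int (v-u) - int k" using dv True by (simp add: of_nat_diff)
    then have "(v-u) mod a = k mod a" using nat_mod_int by blast
    then have "k \<le> v - u" using ka mod_less_eq_dividend[of "v-u" a] by simp
    then have "(h*a+d)*k \<le> (h*a+d)*v" by (meson diff_le_self le_trans mult_le_mono2)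
    then show ?thesis using f1 nuv by linarith
  next
    case False
    show ?thesis
    proof (cases "k = 0")
      case True
      then show ?thesis by simp
    next
      case k0: False
      have eq: "int (u-v) - int (a-k) = - (int v - int u - int k) - int a" using False ka
        by (simp add: of_nat_diff)
      have X: "int a dvd - (int v - int u - int k) - int a" using dv by (intro dvd_diff) (simp_all only: dvd_minus_iff dvd_refl)
      have "int a dvd int (u-v) - int (a-k)" unfolding eq by (rule X)
      then have "(u-v) mod a = (a-k) mod a" using nat_mod_int by blast
      then have "a - k \<le> u - v" using ka k0 mod_less_eq_dividend[of "u-v" a] by simp
      then have "(h*a-d)*(a-k) \<le> (h*a-d)*u" using False by (meson diff_le_self le_trans mult_le_mono2)
      then show ?thesis using f2 k0 nuv by linarith
    qed
  qed
qed
lemma tailsum: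
  fixes x :: complex and a b m :: nat
  assumes "m \<le> a"
  shows "(\<Sum>k\<in>{a-m..<a}. x^(b*(a-k))) = (\<Sum>i<m. x^(b*(i+1)))"
  using assms
proof (induction m)
  case 0 then show ?case by simp
next
  case (Suc m)
  have "{a - Suc m..<a} = insert (a - Suc m) {a-m..<a}" using Suc.prems by auto
  moreover have "a - Suc m \<notin> {a-m..<a}" using Suc.prems by auto
  ultimately have "(\<Sum>k\<in>{a-Suc m..<a}. x^(b*(a-k))) = x^(b*(a-(a-Suc m))) + (\<Sum>k\<in>{a-m..<a}. x^(b*(a-k)))"
    by simp
  also have "\<dots> = x^(b*(m+1)) + (\<Sum>i<m. x^(b*(i+1)))" using Suc by simp
  finally show ?case by (simp add: add.commute)
qed

lemma perm_sum:
  fixes a d :: nat and f :: "nat \<Rightarrow> complex"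
  assumes "a > 0" "coprime a d"
  shows "(\<Sum>r<a. f r) = (\<Sum>k<a. f (d*k mod a))"
proof -
  let ?g = "\<lambda>k. d*k mod a"
  have inj: "inj_on ?g {..<a}"
  proof (rule inj_onI)
    fix k1 k2 assume k1: "k1 \<in> {..<a}" and k2: "k2 \<in> {..<a}" and e: "d*k1 mod a = d*k2 mod a"
    have "int a dvd int (d*k1) - int (d*k2)" using e nat_mod_int by blast
    then have "int a dvd int d * (int k1 - int k2)" by (simp add: algebra_simps)
    moreover have "coprime (int a) (int d)" using assms by simp
    ultimately have "int a dvd int k1 - int k2" by (metis coprime_dvd_mult_right_iff)
    then have "k1 mod a = k2 mod a" using nat_mod_int by blast
    then show "k1 = k2" using k1 k2 by simp
  qed
  have "?g ` {..<a} \<subseteq> {..<a}" using assms by auto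
  then have im: "?g ` {..<a} = {..<a}" using endo_inj_surj[OF _ _ inj] by simp
  have "(\<Sum>r<a. f r) = sum f (?g ` {..<a})" by (simp only: im)
  also have "\<dots> = (\<Sum>k<a. f (d*k mod a))" by (rule sum.reindex_cong[OF inj refl]) simp
  finally show ?thesis .
qed

theorem mainTheorem13:
  fixes a d h :: nat and x :: complex
  assumes "a > 0" "d > 0" "h > 0" "gcd a d = 1" "h * a - d > 1"
    and "x ^ (h * a + d) \<noteq> 1" "x ^ (h * a - d) \<noteq> 1"
  shows "(\<Sum>r<a. x ^ N a [h * a - d, h * a + d] r) =
    (1 - x ^ ((h * a + d) * ((h * a - d) div (2 * h) + 1))) / (1 - x ^ (h * a + d))
    + x ^ (h * a - d) * (1 - x ^ ((h * a - d) * (a - (h * a - d) div (2 * h) - 1)))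
        / (1 - x ^ (h * a - d))"
proof -
  define b where "b = h*a-d"
  define c where "c = h*a+d"
  define r where "r = b div (2*h)"
  define m where "m = a - r - 1"
  have cop: "coprime a d" using assms(4) by (simp add: coprime_iff_gcd_eq_1)
  have dl: "d < h*a" using assms(5) by linarith
  have rb: "r*(2*h) \<le> b" unfolding r_def by (rule div_times_less_eq_dividend)
  have bl: "b < h*a" unfolding b_def using assms by linarith
  have ra: "r < a"
  proof (rule ccontr)
    assume "\<not> r < a"
    then have "a*h \<le> r*h" by simp
    moreover have "r*h \<le> r*(2*h)" by simp
    ultimately have "h*a \<le> r*(2*h)" by (metis mult.commute le_trans)
    then show False using rb bl by linarith
  qed
  define F where "F k = (if 2*h*k \<le> b then c*k else b*(a-k))" for k
  have "(\<Sum>r<a. x ^ N a [b, c] r) = (\<Sum>k<a. x ^ N a [b, c] (d*k mod a))"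
    by (rule perm_sum[OF assms(1) cop])
  also have "\<dots> = (\<Sum>k<a. x ^ F k)"
    using Nval[OF assms(1) assms(2) assms(3) cop dl] unfolding F_def b_def c_def by simp
  also have "\<dots> = (\<Sum>k<r+1. x ^ F k) + (\<Sum>k\<in>{r+1..<a}. x ^ F k)"
    using ra by (metis Suc_eq_plus1 Suc_leI atLeast0LessThan sum.atLeastLessThan_concat zero_le lessThan_atLeast0)
  also have "(\<Sum>k<r+1. x ^ F k) = (\<Sum>k<r+1. (x^c) ^ k)"
  proof (rule sum.cong[OF refl])
    fix k assume "k \<in> {..<r+1}"
    then have "k \<le> r" by simp
    then have "k*(2*h) \<le> b" unfolding r_def using assms(3) by (simp add: less_eq_div_iff_mult_less_eq)
    then show "x ^ F k = (x^c)^k" unfolding F_def by (simp add: power_mult algebra_simps)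
  qed
  also have "(\<Sum>k\<in>{r+1..<a}. x ^ F k) = (\<Sum>k\<in>{a-m..<a}. x^(b*(a-k)))"
  proof -
    have e: "a - m = r+1" unfolding m_def using ra by simp
    show ?thesis unfolding e
    proof (rule sum.cong[OF refl])
      fix k assume "k \<in> {r+1..<a}"
      then have "\<not> k \<le> r" by simp
      then have "\<not> k*(2*h) \<le> b" unfolding r_def using assms(3) by (simp add: less_eq_div_iff_mult_less_eq)
      then show "x ^ F k = x^(b*(a-k))" unfolding F_def by (simp add: algebra_simps)
    qed
  qed
  also have "\<dots> = (\<Sum>i<m. x^(b*(i+1)))" by (rule tailsum) (simp add: m_def)
  also have "\<dots> = x^b * (\<Sum>i<m. (x^b)^i)"
    by (simp add: sum_distrib_left power_mult[symmetric] power_add algebra_simps)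
  finally have main: "(\<Sum>r<a. x ^ N a [b, c] r) = (\<Sum>k<r+1. (x^c) ^ k) + x^b * (\<Sum>i<m. (x^b)^i)" .
  have g1: "(\<Sum>k<r+1. (x^c) ^ k) = (1 - x^(c*(r+1))) / (1 - x^c)"
    using sum_gp_strict[of "x^c" "r+1"] assms(6) unfolding c_def power_mult by (simp only: if_False)
  have g2: "(\<Sum>i<m. (x^b)^i) = (1 - x^(b*m)) / (1 - x^b)"
    using sum_gp_strict[of "x^b" "m"] assms(7) unfolding b_def power_mult by (simp only: if_False)
  show ?thesis using main g1 g2 unfolding b_def c_def r_def m_def by simp
qed
end
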